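(* Let $n,k$ be positive integers and let $\mathscr{K}_{n,k}$ be the family of all graphs with at most $n$ vertices that are disjoint unions of cliques, each clique having at most $k$ vertices. Then \[ \mathscr{U}(\mathscr{K}_{n,k}) ~=~ \sum_{i=1}^k \left\lfloor \frac{n}{i} \right\rfloor ~\ge~ (n+1)\ln(k+1) - k . \]
   Context: All graphs are finite and simple. A graph $U$ is an induced-universal graph for a family $\mathscr{F}$ of graphs if every graph of $\mathscr{F}$ is isomorphic to an induced subgraph of $U$. $\mathscr{U}(\mathscr{F})$ denotes the smallest number of vertices of an induced-universal graph for $\mathscr{F}$. *)

theory Defs
  imports Complex_Main
begin

type_synonym 'a graph = "'a set \<times> ('a \<times> 'a) set"

definition verts :: "'a graph \<Rightarrow> 'a set" where "verts G = fst G"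
definition edges :: "'a graph \<Rightarrow> ('a \<times> 'a) set" where "edges G = snd G"

definition simple_graph :: "'a graph \<Rightarrow> bool" where
  "simple_graph G \<longleftrightarrow> finite (verts G) \<and> edges G \<subseteq> verts G \<times> verts G
     \<and> sym (edges G) \<and> (\<forall>x. (x, x) \<notin> edges G)"

definition induced_embedding :: "('a \<Rightarrow> 'b) \<Rightarrow> 'a graph \<Rightarrow> 'b graph \<Rightarrow> bool" where
  "induced_embedding f G U \<longleftrightarrow> inj_on f (verts G) \<and> f ` verts G \<subseteq> verts U
     \<and> (\<forall>x\<in>verts G. \<forall>y\<in>verts G. (x, y) \<in> edges G \<longleftrightarrow> (f x, f y) \<in> edges U)"

definition induced_universal :: "'b graph \<Rightarrow> 'a graph set \<Rightarrow> bool" where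
  "induced_universal U F \<longleftrightarrow> simple_graph U \<and> (\<forall>G\<in>F. \<exists>f. induced_embedding f G U)"

text \<open>Smallest number of vertices of an induced-universal graph for F
  (vertex type nat suffices, since every finite graph is isomorphic to one on nat).\<close>
definition univ_number :: "'a graph set \<Rightarrow> nat" where
  "univ_number F = (LEAST m. \<exists>U :: nat graph. induced_universal U F \<and> card (verts U) = m)"

text \<open>The closed neighbourhood of x, i.e. its clique in a disjoint union of cliques.\<close>
definition closed_nbhd :: "'a graph \<Rightarrow> 'a \<Rightarrow> 'a set" where
  "closed_nbhd G x = {y \<in> verts G. y = x \<or> (x, y) \<in> edges G}"

definition union_of_cliques :: "'a graph \<Rightarrow> bool" where
  "union_of_cliques G \<longleftrightarrow> (\<forall>x y z. (x, y) \<in> edges G \<longrightarrow> (y, z) \<in> edges G \<longrightarrow> x \<noteq> z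
       \<longrightarrow> (x, z) \<in> edges G)"

text \<open>The family K_{n,k} (graphs up to isomorphism, represented on vertex type nat).\<close>
definition K_family :: "nat \<Rightarrow> nat \<Rightarrow> nat graph set" where
  "K_family n k = {G. simple_graph G \<and> card (verts G) \<le> n \<and> union_of_cliques G
       \<and> (\<forall>x\<in>verts G. card (closed_nbhd G x) \<le> k)}"

end

theory Submission
  imports Defs "HOL-Library.Nat_Bijection" "HOL-Analysis.Harmonic_Numbers"
begin


lemma ln_part:
  fixes n k :: nat
  shows "real (\<Sum>i = 1..k. n div i) \<ge> (real n + 1) * ln (real k + 1) - real k"
proof -
  have each: "real (n div i) \<ge> (real n + 1) / real i - 1" if "i \<ge> 1" for i
  proof -
    have "n mod i < i" using that by simp
    hence "n mod i + 1 \<le> i" by simp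
    moreover have "n = i * (n div i) + n mod i" by simp
    ultimately have "real n + 1 \<le> real i * real (n div i) + real i"
      by (metis of_nat_add of_nat_le_iff of_nat_mult of_nat_1 add.assoc add_left_mono)
    hence "(real n + 1) / real i \<le> real (n div i) + 1" using that
      by (simp add: divide_le_eq algebra_simps)
    thus ?thesis by simp
  qed
  have "(real n + 1) * ln (real k + 1) \<le> (real n + 1) * harm k"
    by (intro mult_left_mono ln_le_harm) auto
  also have "\<dots> = (\<Sum>i = 1..k. (real n + 1) / real i)"
    by (simp add: harm_def sum_distrib_left divide_inverse)
  also have "\<dots> \<le> (\<Sum>i = 1..k. real (n div i) + 1)"
    by (intro sum_mono) (use each in force)
  also have "\<dots> = real (\<Sum>i = 1..k. n div i) + real k"
    by (simp add: sum.distrib)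
  finally show ?thesis by simp
qed

lemma pieces_bound:
  fixes S :: "'p \<Rightarrow> 'v set" and lv :: "'p \<Rightarrow> nat"
  assumes "finite P" "\<forall>p\<in>P. finite (S p) \<and> card (S p) = lv p \<and> lv p \<ge> 1"
    "\<forall>p\<in>P. \<forall>q\<in>P. \<forall>q'\<in>P. lv q = lv q' \<and> q \<noteq> q' \<and> S p \<inter> S q \<noteq> {} \<longrightarrow> S p \<inter> S q' = {}"
  shows "card P \<le> card (\<Union> (S ` P))"
  using assms
proof (induction "card P" arbitrary: P rule: less_induct)
  case less
  show ?case
  proof (cases "P = {}")
    case True then show ?thesis by simp
  next
    case False
    obtain p where p: "p \<in> P" "\<forall>q\<in>P. lv q \<le> lv p"
      using Max_in[of "lv ` P"] Max_ge[of "lv ` P"] less.prems(1) False by fastforce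
    define N where "N = {q\<in>P. S p \<inter> S q \<noteq> {}}"
    define R where "R = P - N"
    have Sp: "S p \<noteq> {}" using p less.prems(2) by fastforce
    have pN: "p \<in> N" using p Sp by (auto simp: N_def)
    have injN: "inj_on lv N"
      unfolding inj_on_def N_def using less.prems(3) p(1) by blast
    have "lv ` N \<subseteq> {1..lv p}" using p less.prems(2) by (auto simp: N_def)
    hence cN: "card N \<le> lv p"
      using card_image[OF injN] card_mono[of "{1..lv p}" "lv ` N"] by simp
    have finN: "finite N" using less.prems(1) by (auto simp: N_def)
    have cP: "card P = card N + card R"
      unfolding R_def using card_Diff_subset[OF finN, of P] card_mono[OF less.prems(1), of N] 
      by (simp add: N_def)
    have "card N > 0" using pN finN card_gt_0_iff by blast
    hence "card R < card P" using cP by linarith  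
    hence IH: "card R \<le> card (\<Union> (S ` R))"
      using less.hyps[of R] less.prems unfolding R_def by (meson DiffD1 finite_Diff)
    have disj: "S p \<inter> \<Union> (S ` R) = {}" by (auto simp: R_def N_def)
    have fin: "finite (\<Union> (S ` R))" using less.prems by (auto simp: R_def)
    have sub: "S p \<union> \<Union> (S ` R) \<subseteq> \<Union> (S ` P)" using p by (auto simp: R_def)
    have finP: "finite (\<Union> (S ` P))" using less.prems by auto
    have "card P \<le> lv p + card (\<Union> (S ` R))" using cP cN IH by linarith
    also have "\<dots> = card (S p \<union> \<Union> (S ` R))"
      using card_Un_disjoint[OF _ fin disj] less.prems(2) p by simp
    also have "\<dots> \<le> card (\<Union> (S ` P))" by (rule card_mono[OF finP sub])
    finally show ?thesis .
  qed
qed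



definition cl_graph :: "nat \<Rightarrow> nat \<Rightarrow> nat graph" where
 "cl_graph i m = ({..<i*m}, {(x,y). x < i*m \<and> y < i*m \<and> x \<noteq> y \<and> x div i = y div i})"

lemma blk: "0 < i \<Longrightarrow> (a div i = j) \<longleftrightarrow> (i*j \<le> a \<and> a < i*j + i)" for a i j :: nat
proof
  assume i: "0 < i" and h: "a div i = j"
  have "a = i*(a div i) + a mod i" by simp
  hence "a = i*j + a mod i" using h by simp
  moreover have "a mod i < i" using i by simp
  ultimately show "i*j \<le> a \<and> a < i*j + i" by linarith
next
  assume i: "0 < i" and r: "i*j \<le> a \<and> a < i*j + i"
  show "a div i = j" by (rule div_nat_eqI) (use r in auto)
qed

lemma blk_set: "0 < i \<Longrightarrow> {a. a div i = j} = {i*j..<i*j+i}" for i j :: nat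
  using blk by auto

lemma cl_in_K:
  assumes "1 \<le> i" "i \<le> k"
  shows "cl_graph i (n div i) \<in> K_family n k"
proof -
  let ?m = "n div i"
  let ?G = "cl_graph i ?m"
  have v: "verts ?G = {..<i*?m}" by (simp add: verts_def cl_graph_def)
  have e: "edges ?G = {(x,y). x < i*?m \<and> y < i*?m \<and> x \<noteq> y \<and> x div i = y div i}"
    by (simp add: edges_def cl_graph_def)
  have sg: "simple_graph ?G" unfolding simple_graph_def v e by (auto simp: sym_def)
  have cv: "card (verts ?G) \<le> n" unfolding v by (simp add: mult.commute)
  have uc: "union_of_cliques ?G" unfolding union_of_cliques_def e by auto
  have nb: "card (closed_nbhd ?G x) \<le> k" if "x \<in> verts ?G" for x
  proof -
    have xl: "x < i * ?m" using that v by simp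
    have "closed_nbhd ?G x = {y. y div i = x div i}"
    proof -
      have "y < i * ?m" if "y div i = x div i" for y
      proof -
        have "x div i < ?m" using xl assms by (simp add: div_less_iff_less_mult mult.commute)
        hence "y div i < ?m" using that by simp
        thus ?thesis using assms by (simp add: div_less_iff_less_mult mult.commute)
      qed
      thus ?thesis unfolding closed_nbhd_def v e by auto
    qed
    also have "\<dots> = {i*(x div i)..<i*(x div i)+i}" using blk_set assms by simp
    finally show ?thesis using assms by simp
  qed
  show ?thesis unfolding K_family_def using sg cv uc nb by blast
qed

lemma lower:
  assumes U: "induced_universal U (K_family n k)"
  shows "(\<Sum>i=1..k. n div i) \<le> card (verts U)"
proof -
  have "\<forall>i\<in>{1..k}. \<exists>f. induced_embedding f (cl_graph i (n div i)) U"
    using U cl_in_K unfolding induced_universal_def by auto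
  then obtain F where F: "\<And>i. i \<in> {1..k} \<Longrightarrow> induced_embedding (F i) (cl_graph i (n div i)) U"
    by metis
  have finU: "finite (verts U)" using U by (simp add: induced_universal_def simple_graph_def)
  define P where "P = Sigma {1..k} (\<lambda>i. {..<n div i})"
  define S where "S = (\<lambda>(i,j). F i ` {i*j..<i*j+i})"
  define lv where "lv = (\<lambda>(i::nat,j::nat). i)"
  have cP: "card P = (\<Sum>i=1..k. n div i)" unfolding P_def by simp
  have vG: "verts (cl_graph i m) = {..<i*m}" for i m by (simp add: verts_def cl_graph_def)
  have eG: "edges (cl_graph i m) = {(x,y). x < i*m \<and> y < i*m \<and> x \<noteq> y \<and> x div i = y div i}" for i m
    by (simp add: edges_def cl_graph_def)
  have blkv: "{i*j..<i*j+i} \<subseteq> verts (cl_graph i (n div i))" if "(i,j) \<in> P" for i j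
  proof -
    have "Suc j \<le> n div i" using that by (auto simp: P_def)
    hence "i * Suc j \<le> i * (n div i)" by (rule mult_le_mono2)
    thus ?thesis unfolding vG by auto
  qed
  have SU: "S p \<subseteq> verts U" if "p \<in> P" for p
  proof -
    obtain i j where ij: "p = (i,j)" by fastforce
    have "i \<in> {1..k}" using that ij by (simp add: P_def)
    hence "F i ` verts (cl_graph i (n div i)) \<subseteq> verts U" using F unfolding induced_embedding_def by blast
    moreover have "S p \<subseteq> F i ` verts (cl_graph i (n div i))"
      unfolding S_def ij using blkv[of i j] that ij by auto
    ultimately show ?thesis by blast
  qed
  have h1: "\<forall>p\<in>P. finite (S p) \<and> card (S p) = lv p \<and> lv p \<ge> 1"
  proof
    fix p assume p: "p \<in> P"
    obtain i j where ij: "p = (i,j)" by fastforce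
    have i1: "i \<in> {1..k}" using p ij by (simp add: P_def)
    have "inj_on (F i) (verts (cl_graph i (n div i)))"
      using F[OF i1] unfolding induced_embedding_def by blast
    hence inj: "inj_on (F i) {i*j..<i*j+i}"
      using blkv[of i j] p ij inj_on_subset by blast
    have "card (S p) = i" unfolding S_def ij using card_image[OF inj] by simp
    thus "finite (S p) \<and> card (S p) = lv p \<and> lv p \<ge> 1"
      using i1 by (simp add: S_def lv_def ij)
  qed
  have h2: "\<forall>p\<in>P. \<forall>q\<in>P. \<forall>q'\<in>P. lv q = lv q' \<and> q \<noteq> q' \<and> S p \<inter> S q \<noteq> {} \<longrightarrow> S p \<inter> S q' = {}"
  proof (intro ballI impI)
    fix p q q' assume pP: "p \<in> P" and qP: "q \<in> P" and q'P: "q' \<in> P"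
      and H: "lv q = lv q' \<and> q \<noteq> q' \<and> S p \<inter> S q \<noteq> {}"
    obtain i0 j0 where p: "p = (i0,j0)" by fastforce
    obtain i j where q: "q = (i,j)" by fastforce
    obtain j' where q': "q' = (i,j')" using H q unfolding lv_def by (cases q') auto
    have jj: "j \<noteq> j'" using H q q' by auto
    have i0: "i0 \<ge> 1" "i0 \<in> {1..k}" and i: "i \<ge> 1" "i \<in> {1..k}" using pP qP p q by (auto simp: P_def)
    show "S p \<inter> S q' = {}"
    proof (rule ccontr)
      assume "S p \<inter> S q' \<noteq> {}"
      then obtain y where y1: "y \<in> F i0 ` {i0*j0..<i0*j0+i0}" and y2: "y \<in> F i ` {i*j'..<i*j'+i}"
        unfolding S_def p q' by auto
      obtain b0 where b0: "b0 \<in> {i0*j0..<i0*j0+i0}" and yb0: "y = F i0 b0" using y1 by blast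
      obtain b where b: "b \<in> {i*j'..<i*j'+i}" and yb: "y = F i b" using y2 by blast
      have eb: "F i b = F i0 b0" using yb yb0 by simp
      obtain x where x1: "x \<in> F i0 ` {i0*j0..<i0*j0+i0}" and x2: "x \<in> F i ` {i*j..<i*j+i}"
        using H unfolding S_def p q by auto
      obtain a0 where a0: "a0 \<in> {i0*j0..<i0*j0+i0}" and xa0: "x = F i0 a0" using x1 by blast
      obtain a where a: "a \<in> {i*j..<i*j+i}" and xa: "x = F i a" using x2 by blast
      have ea: "F i a = F i0 a0" using xa xa0 by simp
      have Ei: "induced_embedding (F i) (cl_graph i (n div i)) U" using F i by simp
      have Ei0: "induced_embedding (F i0) (cl_graph i0 (n div i0)) U" using F i0 by simp
      have av: "a \<in> verts (cl_graph i (n div i))" using a blkv[of i j] qP q by blast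
      have bv: "b \<in> verts (cl_graph i (n div i))" using b blkv[of i j'] q'P q' by blast
      have a0v: "a0 \<in> verts (cl_graph i0 (n div i0))" using a0 blkv[of i0 j0] pP p by blast
      have b0v: "b0 \<in> verts (cl_graph i0 (n div i0))" using b0 blkv[of i0 j0] pP p by blast
      have da: "a div i = j" using blk[of i a j] a i by simp
      have db: "b div i = j'" using blk[of i b j'] b i by simp
      have da0: "a0 div i0 = j0" using blk[of i0 a0 j0] a0 i0 by simp
      have db0: "b0 div i0 = j0" using blk[of i0 b0 j0] b0 i0 by simp
      have ab: "a \<noteq> b" using da db jj by auto
      hence "F i a \<noteq> F i b" using Ei av bv unfolding induced_embedding_def inj_on_def by blast
      hence "a0 \<noteq> b0" using ea eb by auto
      hence "(a0, b0) \<in> edges (cl_graph i0 (n div i0))"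
        using a0v b0v da0 db0 unfolding vG eG by auto
      hence "(F i0 a0, F i0 b0) \<in> edges U" using Ei0 a0v b0v unfolding induced_embedding_def by blast
      hence "(F i a, F i b) \<in> edges U" using ea eb by simp
      hence "(a, b) \<in> edges (cl_graph i (n div i))" using Ei av bv unfolding induced_embedding_def by blast
      hence "a div i = b div i" unfolding eG by auto
      thus False using da db jj by simp
    qed
  qed
  have finP: "finite P" unfolding P_def by auto
  have "card P \<le> card (\<Union> (S ` P))" by (rule pieces_bound[OF finP h1 h2])
  also have "\<dots> \<le> card (verts U)" using SU finU by (intro card_mono) auto
  finally show ?thesis using cP by simp
qed



definition Pset :: "nat \<Rightarrow> nat \<Rightarrow> (nat \<times> nat) set" where
  "Pset n k = {(i,j). 1 \<le> i \<and> i \<le> k \<and> 1 \<le> j \<and> i*j \<le> n}"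

definition Ugraph :: "nat \<Rightarrow> nat \<Rightarrow> nat graph" where
  "Ugraph n k = (prod_encode ` Pset n k,
     {(prod_encode (i,j), prod_encode (i',j)) | i i' j. (i,j) \<in> Pset n k \<and> (i',j) \<in> Pset n k \<and> i \<noteq> i'})"

lemma Pset_Sigma: "Pset n k = Sigma {1..k} (\<lambda>i. {1..n div i})"
proof -
  have "i*j \<le> n \<longleftrightarrow> j \<le> n div i" if "1 \<le> i" for i j :: nat
    using less_eq_div_iff_mult_less_eq[of i j n] that by (simp add: mult.commute)
  thus ?thesis unfolding Pset_def by auto
qed

lemma Ugraph_card: "card (verts (Ugraph n k)) = (\<Sum>i=1..k. n div i)"
proof -
  have "card (verts (Ugraph n k)) = card (Pset n k)"
    unfolding Ugraph_def verts_def by (simp add: card_image inj_prod_encode)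
  also have "\<dots> = (\<Sum>i=1..k. n div i)" unfolding Pset_Sigma by simp
  finally show ?thesis .
qed

lemma Ugraph_simple: "simple_graph (Ugraph n k)"
proof -
  have fin: "finite (Pset n k)" unfolding Pset_Sigma by simp
  show ?thesis unfolding simple_graph_def Ugraph_def verts_def edges_def
    using fin by (auto simp: sym_def)
qed

lemma Ugraph_edge:
  "(prod_encode (i,j), prod_encode (i',j')) \<in> edges (Ugraph n k) \<longleftrightarrow>
     (i,j) \<in> Pset n k \<and> (i',j') \<in> Pset n k \<and> j = j' \<and> i \<noteq> i'"
  unfolding Ugraph_def edges_def by auto

lemma embed:
  assumes G: "G \<in> K_family n k"
  shows "\<exists>f. induced_embedding f G (Ugraph n k)"
proof -
  define V where "V = verts G"
  define E where "E = edges G"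
  define N where "N = closed_nbhd G"
  define CC where "CC = N ` V"
  have sg: "simple_graph G" and cV: "card V \<le> n" and uc: "union_of_cliques G"
    and ck: "\<And>x. x \<in> V \<Longrightarrow> card (N x) \<le> k"
    using G unfolding K_family_def V_def N_def by auto
  have finV: "finite V" and EV: "E \<subseteq> V \<times> V" and symE: "sym E" and irr: "\<And>x. (x,x) \<notin> E"
    using sg unfolding simple_graph_def V_def E_def by auto
  have tr: "\<And>x y z. (x,y) \<in> E \<Longrightarrow> (y,z) \<in> E \<Longrightarrow> x \<noteq> z \<Longrightarrow> (x,z) \<in> E"
    using uc unfolding union_of_cliques_def E_def by blast
  have Nx: "N x = {y \<in> V. y = x \<or> (x,y) \<in> E}" for x
    unfolding N_def closed_nbhd_def V_def E_def by simp
  have F1: "x \<in> N x" if "x \<in> V" for x using that Nx by simp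
  have F5: "N x \<subseteq> V" for x using Nx by auto
  have finN: "finite (N x)" for x using F5 finV finite_subset by blast
  have Eeq: "N x = N y" if "(x,y) \<in> E" for x y
  proof -
    have yx: "(y,x) \<in> E" using that symE by (simp add: sym_def)
    have "z \<in> N y" if zx: "z \<in> N x" and xy: "(x,y) \<in> E" and yx': "(y,x) \<in> E" for z x y
    proof -
      have zV: "z \<in> V" using zx Nx by auto
      consider "z = x" | "(x,z) \<in> E" using zx Nx by auto
      then show ?thesis
      proof cases
        case 1 thus ?thesis using yx' EV zV Nx by auto
      next
        case 2
        show ?thesis
        proof (cases "z = y")
          case True thus ?thesis using zV Nx by auto
        next
          case False thus ?thesis using tr[OF yx' 2] zV Nx by auto
        qed
      qed
    qed
    thus ?thesis using that yx by blast
  qed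
  have F2: "(x,y) \<in> E \<longleftrightarrow> x \<noteq> y \<and> N x = N y" if "x \<in> V" "y \<in> V" for x y
  proof
    assume "(x,y) \<in> E" thus "x \<noteq> y \<and> N x = N y" using irr Eeq by auto
  next
    assume h: "x \<noteq> y \<and> N x = N y"
    hence "y \<in> N x" using F1 that by simp
    thus "(x,y) \<in> E" using h Nx by auto
  qed
  have F3: "N z = N x" if "z \<in> N x" for x z
  proof (cases "z = x")
    case True thus ?thesis by simp
  next
    case False
    hence "(x,z) \<in> E" using that Nx by auto
    thus ?thesis using Eeq by simp
  qed
  have F4: "C \<inter> D = {}" if CD: "C \<in> CC" "D \<in> CC" "C \<noteq> D" for C D
  proof (rule ccontr)
    assume "C \<inter> D \<noteq> {}"
    then obtain z where z: "z \<in> C" "z \<in> D" by blast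
    obtain x y where "C = N x" "D = N y" using CD CC_def by auto
    thus False using F3 z CD by metis
  qed
  have CCne: "C \<noteq> {}" "finite C" "C \<subseteq> V" if CinCC: "C \<in> CC" for C
  proof -
    obtain x where x: "x \<in> V" "C = N x" using CinCC unfolding CC_def by blast
    show "C \<noteq> {}" using F1[OF x(1)] x(2) by blast
    show "finite C" using finN x(2) by simp
    show "C \<subseteq> V" using F5 x(2) by simp
  qed
  define bef where "bef = (\<lambda>D C. card C < card (D::nat set) \<or> (card D = card C \<and> Min D < Min C))"
  define tau where "tau = (\<lambda>C. card {D \<in> CC. bef D C})"
  have finCC: "finite CC" unfolding CC_def using finV by simp
  have F6: "bef C D \<or> bef D C" if CD: "C \<in> CC" "D \<in> CC" "C \<noteq> D" for C D
  proof -
    have m1: "Min C \<in> C" by (rule Min_in[OF CCne(2)[OF CD(1)] CCne(1)[OF CD(1)]])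
    have m2: "Min D \<in> D" by (rule Min_in[OF CCne(2)[OF CD(2)] CCne(1)[OF CD(2)]])
    have cd: "C \<inter> D = {}" by (rule F4[OF CD])
    have "Min C \<noteq> Min D"
    proof
      assume "Min C = Min D"
      hence "Min C \<in> C \<inter> D" using m1 m2 by simp
      thus False using cd by simp
    qed
    thus ?thesis unfolding bef_def by linarith
  qed
  have bef_irr: "\<not> bef C C" for C unfolding bef_def by simp
  have bef_tr: "bef D C \<Longrightarrow> bef C B \<Longrightarrow> bef D B" for B C D unfolding bef_def by linarith
  have F7: "tau D < tau C" if "bef D C" "D \<in> CC" for C D
  proof -
    have "{E \<in> CC. bef E D} \<subseteq> {E \<in> CC. bef E C}" using bef_tr that by blast
    moreover have "D \<notin> {E \<in> CC. bef E D}" using bef_irr by blast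
    moreover have "D \<in> {E \<in> CC. bef E C}" using that by blast
    ultimately have "{E \<in> CC. bef E D} \<subset> {E \<in> CC. bef E C}" by blast
    thus ?thesis unfolding tau_def by (rule psubset_card_mono[rotated]) (simp add: finCC)
  qed
  have F8: "C = D" if "C \<in> CC" "D \<in> CC" "tau C = tau D" for C D
    using F6[OF that(1,2)] F7 that by fastforce
  have F9: "(tau C + 1) * card C \<le> n" if C: "C \<in> CC" for C
  proof -
    define A where "A = insert C {D \<in> CC. bef D C}"
    have finA: "finite A" using finCC by (simp add: A_def)
    have cA: "card A = tau C + 1" unfolding A_def tau_def using finCC bef_irr by simp
    have AC: "A \<subseteq> CC" using C by (auto simp: A_def)
    have ge: "card C \<le> card D" if "D \<in> A" for D using that by (auto simp: A_def bef_def)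
    have "(tau C + 1) * card C = (\<Sum>D\<in>A. card C)" using cA by simp
    also have "\<dots> \<le> (\<Sum>D\<in>A. card D)" using ge by (rule sum_mono)
    also have "\<dots> = card (\<Union>A)"
    proof (rule card_Union_disjoint[symmetric])
      show "pairwise disjnt A" unfolding pairwise_def disjnt_def using F4 AC by blast
      show "\<And>B. B \<in> A \<Longrightarrow> finite B" using CCne AC by blast
    qed
    also have "\<dots> \<le> card V" using CCne AC finV by (intro card_mono) auto
    finally show ?thesis using cV by linarith
  qed
  define r where "r = (\<lambda>x. card {y \<in> N x. y < x})"
  define f where "f = (\<lambda>x. prod_encode (r x + 1, tau (N x) + 1))"
  have NCC: "N x \<in> CC" if "x \<in> V" for x using that CC_def by blast
  have F10: "r x < card (N x)" if xV: "x \<in> V" for x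
  proof -
    have "{y \<in> N x. y < x} \<subset> N x" using F1[OF xV] by auto
    thus ?thesis unfolding r_def by (rule psubset_card_mono[OF finN])
  qed
  have F11: "x = y" if xyh: "x \<in> V" "y \<in> V" "N x = N y" "r x = r y" for x y
  proof (rule ccontr)
    assume ne: "x \<noteq> y"
    have key: "r a < r b" if ab: "a < b" "a \<in> N b" "N a = N b" for a b
    proof -
      have "{z \<in> N a. z < a} \<subset> {z \<in> N b. z < b}" using ab by auto
      moreover have "finite {z \<in> N b. z < b}" using finN[of b] by simp
      ultimately show ?thesis unfolding r_def using psubset_card_mono by blast
    qed
    show False
    proof (cases "x < y")
      case True
      have "x \<in> N y" using F1[OF xyh(1)] xyh(3) by simp
      from key[OF True this xyh(3)] show False using xyh(4) by simp
    next
      case False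
      hence "y < x" using ne by simp
      have "y \<in> N x" using F1[OF xyh(2)] xyh(3) by simp
      from key[OF \<open>y < x\<close> this xyh(3)[symmetric]] show False using xyh(4) by simp
    qed
  qed
  have inP: "(r x + 1, tau (N x) + 1) \<in> Pset n k" if xV: "x \<in> V" for x
  proof -
    have a: "r x + 1 \<le> card (N x)" using F10[OF xV] by simp
    have b: "card (N x) \<le> k" using ck[OF xV] .
    have c: "(tau (N x) + 1) * card (N x) \<le> n" using F9[OF NCC[OF xV]] .
    have "(r x + 1) * (tau (N x) + 1) \<le> card (N x) * (tau (N x) + 1)" using a by (rule mult_le_mono1)
    also have "\<dots> \<le> n" using c by (simp add: mult.commute)
    finally show ?thesis using a b unfolding Pset_def by simp
  qed
  have "induced_embedding f G (Ugraph n k)"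
    unfolding induced_embedding_def
  proof (intro conjI)
    show "inj_on f (verts G)"
    proof (rule inj_onI)
      fix x y assume xy: "x \<in> verts G" "y \<in> verts G" "f x = f y"
      hence "r x = r y" "tau (N x) = tau (N y)" unfolding f_def by auto
      moreover have "N x = N y" using F8[OF NCC NCC] xy V_def calculation(2) by simp
      ultimately show "x = y" using F11 xy V_def by simp
    qed
    show "f ` verts G \<subseteq> verts (Ugraph n k)"
      using inP unfolding f_def V_def Ugraph_def verts_def by auto
    show "\<forall>x\<in>verts G. \<forall>y\<in>verts G. (x, y) \<in> edges G \<longleftrightarrow> (f x, f y) \<in> edges (Ugraph n k)"
    proof (intro ballI)
      fix x y assume x: "x \<in> verts G" and y: "y \<in> verts G"
      have xV: "x \<in> V" and yV: "y \<in> V" using x y V_def by auto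
      have "(f x, f y) \<in> edges (Ugraph n k) \<longleftrightarrow> tau (N x) = tau (N y) \<and> r x \<noteq> r y"
        unfolding f_def Ugraph_edge using inP[OF xV] inP[OF yV] by simp
      also have "\<dots> \<longleftrightarrow> N x = N y \<and> x \<noteq> y"
        using F8[OF NCC[OF xV] NCC[OF yV]] F11[OF xV yV] by auto
      also have "\<dots> \<longleftrightarrow> (x, y) \<in> E" using F2[OF xV yV] by auto
      finally show "(x, y) \<in> edges G \<longleftrightarrow> (f x, f y) \<in> edges (Ugraph n k)" using E_def by simp
    qed
  qed
  thus ?thesis by blast
qed


theorem theorem1:
  fixes n k :: nat
  assumes "n \<ge> 1" and "k \<ge> 1"
  shows "univ_number (K_family n k) = (\<Sum>i = 1..k. n div i)
     \<and> real (\<Sum>i = 1..k. n div i) \<ge> (real n + 1) * ln (real k + 1) - real k"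
proof
  have U: "induced_universal (Ugraph n k) (K_family n k)"
    unfolding induced_universal_def using Ugraph_simple embed by blast
  show "univ_number (K_family n k) = (\<Sum>i = 1..k. n div i)"
    unfolding univ_number_def
  proof (rule Least_equality)
    show "\<exists>U :: nat graph. induced_universal U (K_family n k) \<and> card (verts U) = (\<Sum>i = 1..k. n div i)"
      using U Ugraph_card by blast
  next
    fix m assume "\<exists>U :: nat graph. induced_universal U (K_family n k) \<and> card (verts U) = m"
    then obtain U :: "nat graph" where "induced_universal U (K_family n k)" "card (verts U) = m" by blast
    thus "(\<Sum>i = 1..k. n div i) \<le> m" using lower by blast
  qed
  show "real (\<Sum>i = 1..k. n div i) \<ge> (real n + 1) * ln (real k + 1) - real k"
    by (rule ln_part)
qed

end
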